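(* In a $2^K$ factorial experiment, for each $*\in\{N,F,L\}$, $\tilde\tau_*=C_S\hat Y_*$ and $\tilde\Omega_*=C_S\hat\Psi_*C_S^T$.
   Context: A $2^K$ factorial experiment ($K$ a positive integer) has $K$ binary factors and $Q=2^K$ treatment levels $q=(z_1,\dots,z_K)\in\{-1,+1\}^K$, identified with $1,\dots,Q$ in lexicographical order ($-1$ before $+1$). There are $N$ units with observed outcomes $Y_i$ and covariates $x_i\in\mathbb R^J$ (with $\sum_ix_i=0$); $Z_{ik}\in\{-1,+1\}$ is the level of factor $k$ received by unit $i$, $t_i\in\{0,1\}^Q$ is the indicator vector of unit $i$'s treatment level, and each level is received by at least one unit. Let $\mathcal P_K$ be the set of nonempty subsets of $\{1,\dots,K\}$, $Z_{i,\mathcal K}=\prod_{k\in\mathcal K}Z_{ik}$, and $c_{\mathcal K}\in\mathbb R^Q$ the vector whose entry at level $(z_1,\dots,z_K)$ is $2^{-(K-1)}\prod_{k\in\mathcal K}z_k$. $C_S$ is the $(Q-1)\times Q$ matrix with rows $c_{\mathcal K}^T$, $\mathcal K\in\mathcal P_K$, in a fixed order. Treatment-based OLS regressions (no intercept): unadjusted $Y_i\sim t_i$, additive $Y_i\sim t_i+x_i$, fully interacted $Y_i\sim t_i+t_i\otimes x_i$; $\hat Y_*$ ($*=N,F,L$) is the coefficient vector of $t_i$ and $\hat\Psi_*$ its Eicker–Huber–White (EHW) covariance estimator (the corresponding block of $(X^TX)^{-1}X^T\mathrm{diag}(\hat\epsilon_i^2)X(X^TX)^{-1}$, $X$ the design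 matrix, $\hat\epsilon_i$ OLS residuals). Factor-saturated OLS regressions: $Y_i\sim1+\sum_{\mathcal K\in\mathcal P_K}Z_{i,\mathcal K}$ (N), $Y_i\sim1+\sum_{\mathcal K\in\mathcal P_K}Z_{i,\mathcal K}+x_i$ (F), $Y_i\sim1+\sum_{\mathcal K\in\mathcal P_K}Z_{i,\mathcal K}+x_i+\sum_{\mathcal K\in\mathcal P_K}Z_{i,\mathcal K}x_i$ (L). $\tilde\tau_{*,\mathcal K}$ is 2 times the OLS coefficient of $Z_{i,\mathcal K}$ in regression $*$, $\tilde\tau_*=(\tilde\tau_{*,\mathcal K})_{\mathcal K\in\mathcal P_K}$ in the same order as the rows of $C_S$, and $\tilde\Omega_*$ is the EHW covariance estimator of $\tilde\tau_*$ from the same fit (4 times the EHW covariance of these coefficients). *)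

theory Defs
  imports "Jordan_Normal_Form.Gauss_Jordan_Elimination"
begin

definition gram_inv :: "real mat \<Rightarrow> real mat" where
  "gram_inv X = the (mat_inverse (transpose_mat X * X))"

definition ols_coef :: "real mat \<Rightarrow> real vec \<Rightarrow> real vec" where
  "ols_coef X y = gram_inv X *\<^sub>v (transpose_mat X *\<^sub>v y)"

definition ols_resid :: "real mat \<Rightarrow> real vec \<Rightarrow> real vec" where
  "ols_resid X y = y - X *\<^sub>v ols_coef X y"

definition ehw_cov :: "real mat \<Rightarrow> real vec \<Rightarrow> real mat" where
  "ehw_cov X y =
     (let e = ols_resid X y;
          D = mat (dim_row X) (dim_row X) (\<lambda>(i,j). if i = j then (e $ i)\<^sup>2 else 0)
      in gram_inv X * (transpose_mat X * D * X) * gram_inv X)"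

definition subvec :: "nat \<Rightarrow> nat \<Rightarrow> 'a vec \<Rightarrow> 'a vec" where
  "subvec a n v = vec n (\<lambda>i. v $ (a + i))"

definition subblock :: "nat \<Rightarrow> nat \<Rightarrow> 'a mat \<Rightarrow> 'a mat" where
  "subblock a n M = mat n n (\<lambda>(i,j). M $$ (a + i, a + j))"

(* level of factor k (0-based, k < K) at treatment level q (0-based, q < 2^K),
   levels in lexicographic order with -1 before +1 (factor 0 most significant) *)
definition zlev :: "nat \<Rightarrow> nat \<Rightarrow> nat \<Rightarrow> real" where
  "zlev K q k = (if odd (q div 2 ^ (K - 1 - k)) then 1 else -1)"

definition tind :: "nat \<Rightarrow> (nat \<Rightarrow> nat \<Rightarrow> real) \<Rightarrow> nat \<Rightarrow> nat \<Rightarrow> real" where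
  "tind K Z i q = (if (\<forall>k<K. Z i k = zlev K q k) then 1 else 0)"

definition Zprod :: "(nat \<Rightarrow> nat \<Rightarrow> real) \<Rightarrow> nat \<Rightarrow> nat set \<Rightarrow> real" where
  "Zprod Z i S = (\<Prod>k\<in>S. Z i k)"

definition contrast_mat :: "nat \<Rightarrow> nat set list \<Rightarrow> real mat" where
  "contrast_mat K Ks = mat (length Ks) (2 ^ K)
     (\<lambda>(r,q). (1 / 2 ^ (K - 1)) * (\<Prod>k\<in>Ks ! r. zlev K q k))"

datatype regtype = Unadj | Addit | Inter   (* N, F, L *)

definition treat_design ::
  "regtype \<Rightarrow> nat \<Rightarrow> nat \<Rightarrow> nat \<Rightarrow> (nat \<Rightarrow> nat \<Rightarrow> real) \<Rightarrow> (nat \<Rightarrow> nat \<Rightarrow> real) \<Rightarrow> real mat" where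
  "treat_design r K N J Z x =
    (let Q = 2 ^ K in
     case r of
       Unadj \<Rightarrow> mat N Q (\<lambda>(i,c). tind K Z i c)
     | Addit \<Rightarrow> mat N (Q + J) (\<lambda>(i,c). if c < Q then tind K Z i c else x i (c - Q))
     | Inter \<Rightarrow> mat N (Q + Q * J) (\<lambda>(i,c). if c < Q then tind K Z i c
                   else tind K Z i ((c - Q) div J) * x i ((c - Q) mod J)))"

(* factor-saturated designs: intercept, then Z_{i,S} for S in Ks, then x_i,
   then Z_{i,S} x_i for S in Ks (block S = Ks!m, entry j at 1+(Q-1)+J+m*J+j) *)
definition fact_design ::
  "regtype \<Rightarrow> nat \<Rightarrow> nat set list \<Rightarrow> nat \<Rightarrow> nat \<Rightarrow> (nat \<Rightarrow> nat \<Rightarrow> real) \<Rightarrow> (nat \<Rightarrow> nat \<Rightarrow> real) \<Rightarrow> real mat" where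
  "fact_design r K Ks N J Z x =
    (let P = length Ks in
     case r of
       Unadj \<Rightarrow> mat N (1 + P) (\<lambda>(i,c). if c = 0 then 1 else Zprod Z i (Ks ! (c - 1)))
     | Addit \<Rightarrow> mat N (1 + P + J) (\<lambda>(i,c). if c = 0 then 1
                   else if c \<le> P then Zprod Z i (Ks ! (c - 1)) else x i (c - 1 - P))
     | Inter \<Rightarrow> mat N (1 + P + J + P * J) (\<lambda>(i,c). if c = 0 then 1
                   else if c \<le> P then Zprod Z i (Ks ! (c - 1))
                   else if c \<le> P + J then x i (c - 1 - P)
                   else Zprod Z i (Ks ! ((c - 1 - P - J) div J)) * x i ((c - 1 - P - J) mod J)))"

definition Yhat where
  "Yhat r K N J Z x Y = subvec 0 (2 ^ K) (ols_coef (treat_design r K N J Z x) (vec N Y))"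
definition Psihat where
  "Psihat r K N J Z x Y = subblock 0 (2 ^ K) (ehw_cov (treat_design r K N J Z x) (vec N Y))"

definition tautilde where
  "tautilde r K Ks N J Z x Y =
     2 \<cdot>\<^sub>v subvec 1 (length Ks) (ols_coef (fact_design r K Ks N J Z x) (vec N Y))"
definition Omegatilde where
  "Omegatilde r K Ks N J Z x Y =
     4 \<cdot>\<^sub>m subblock 1 (length Ks) (ehw_cov (fact_design r K Ks N J Z x) (vec N Y))"

end

theory Submission
  imports Defs "Jordan_Normal_Form.Determinant" "HOL-Library.FuncSet"
begin
lemma zlev_inj:
  assumes "q < 2^K" "q' < 2^K" "\<forall>k<K. zlev K q k = zlev K q' k"
  shows "q = q'"
proof (rule bit_eqI)
  fix n
  show "bit q n = bit q' n"
  proof (cases "n < K")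
    case True
    define k where "k = K - 1 - n"
    have "k < K" "K - 1 - k = n" using True by (auto simp: k_def)
    then have "zlev K q k = zlev K q' k" using assms(3) by auto
    then have "odd (q div 2^n) = odd (q' div 2^n)" using \<open>K - 1 - k = n\<close>
      by (auto simp: zlev_def split: if_splits)
    then show ?thesis by (simp add: bit_iff_odd)
  next
    case False
    have "(2::nat)^K \<le> 2^n" using False by (intro power_increasing) auto
    then have "q < 2^n" "q' < 2^n" using assms by linarith+
    then show ?thesis by (simp add: bit_iff_odd)
  qed
qed

lemma zlev_surj:
  assumes "\<forall>k<K. Z k = (1::real) \<or> Z k = -1"
  shows "\<exists>q<2^K. \<forall>k<K. zlev K q k = Z k"
proof -
  define \<phi> where "\<phi> q = restrict (zlev K q) {0..<K}" for q
  define T where "T = PiE {0..<K} (\<lambda>_. {-1::real,1})"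
  have inj: "inj_on \<phi> {0..<2^K}"
  proof (rule inj_onI)
    fix q q' assume "q \<in> {0..<2^K}" "q' \<in> {0..<2^K}" "\<phi> q = \<phi> q'"
    then show "q = q'"
      by (intro zlev_inj[of q K q']) (auto simp: \<phi>_def restrict_def fun_eq_iff split: if_splits)
  qed
  have sub: "\<phi> ` {0..<2^K} \<subseteq> T"
    by (auto simp: \<phi>_def T_def zlev_def)
  have "card T = (\<Prod>i\<in>{0..<K}. card {-1::real,1})" by (simp add: T_def card_PiE)
  also have "\<dots> = 2^K"
  proof -
    have "card {-1::real,1} = 2" by simp
    then show ?thesis by (simp add: numeral_2_eq_2)
  qed
  finally have cT: "card T = 2^K" .
  have ci: "card (\<phi> ` {0..<2^K}) = 2^K" using card_image[OF inj] by simp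
  have "\<phi> ` {0..<2^K} = T"
    by (rule card_subset_eq) (use sub cT ci in \<open>auto simp: T_def intro!: finite_PiE\<close>)
  moreover have "restrict Z {0..<K} \<in> T" using assms by (auto simp: T_def)
  ultimately obtain q where "q < 2^K" "\<phi> q = restrict Z {0..<K}" by force
  then show ?thesis
    by (intro exI[of _ q]) (auto simp: \<phi>_def restrict_def fun_eq_iff split: if_splits)
qed




definition KsOK :: "nat \<Rightarrow> nat set list \<Rightarrow> bool" where
  "KsOK K Ks \<longleftrightarrow> distinct Ks \<and> set Ks = {S. S \<subseteq> {0..<K} \<and> S \<noteq> {}}"

definition Hm :: "nat \<Rightarrow> nat set list \<Rightarrow> real mat" where
  "Hm K Ks = mat (2^K) (2^K) (\<lambda>(q,c). if c = 0 then 1 else (\<Prod>k\<in>Ks!(c-1). zlev K q k))"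

definition Hi :: "nat \<Rightarrow> nat set list \<Rightarrow> real mat" where
  "Hi K Ks = mat (2^K) (2^K) (\<lambda>(r,c). Hm K Ks $$ (c,r) / 2^K)"

lemma len_Ks: assumes "KsOK K Ks" shows "length Ks = 2^K - 1"
proof -
  have "{S. S \<subseteq> {0..<K} \<and> S \<noteq> {}} = Pow {0..<K} - {{}}" by auto
  then have "card (set Ks) = 2^K - 1" using assms unfolding KsOK_def
    by (simp add: card_Diff_singleton card_Pow)
  then show ?thesis using assms distinct_card[of Ks] unfolding KsOK_def by simp
qed

lemma HH:
  assumes "KsOK K Ks" "x < 2^K" "y < 2^K"
  shows "(\<Sum>c<2^K. Hm K Ks $$ (x,c) * Hm K Ks $$ (y,c)) = (if x = y then 2^K else 0)"
proof -
  define P where "P = length Ks"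
  have QP: "(2::nat)^K = Suc P"
  proof -
    have "(0::nat) < 2^K" by simp
    then show ?thesis using len_Ks[OF assms(1)] unfolding P_def by linarith
  qed
  define g where "g k = zlev K x k * zlev K y k" for k
  define G where "G S = (\<Prod>k\<in>S. g k)" for S
  have "(\<Sum>c<2^K. Hm K Ks $$ (x,c) * Hm K Ks $$ (y,c)) = 1 + (\<Sum>m<P. G (Ks!m))"
    unfolding QP sum.lessThan_Suc_shift
    using assms QP by (simp add: Hm_def G_def g_def prod.distrib)
  also have "(\<Sum>m<P. G (Ks!m)) = (\<Sum>S\<in>set Ks. G S)"
    by (rule sum.reindex_bij_betw[OF bij_betw_nth]) (use assms in \<open>auto simp: KsOK_def P_def\<close>)
  also have "set Ks = Pow {0..<K} - {{}}" using assms unfolding KsOK_def by auto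
  also have "1 + (\<Sum>S\<in>Pow {0..<K} - {{}}. G S) = (\<Sum>S\<in>Pow {0..<K}. G S)"
    by (subst sum.remove[of _ "{}"]) (auto simp: G_def)
  also have "\<dots> = (\<Prod>k\<in>{0..<K}. g k + 1)"
    unfolding prod_add[OF finite_atLeastLessThan] G_def by simp
  also have "\<dots> = (if x = y then 2^K else 0)"
  proof (cases "x = y")
    case True
    then have "g k = 1" for k unfolding g_def zlev_def by auto
    then show ?thesis using True by simp
  next
    case False
    then obtain k where "k < K" "zlev K x k \<noteq> zlev K y k" using zlev_inj assms by blast
    then have "g k + 1 = 0" unfolding g_def zlev_def by (auto split: if_splits)
    have "(\<Prod>k\<in>{0..<K}. g k + 1) = 0" using \<open>k < K\<close> \<open>g k + 1 = 0\<close>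
      by (intro prod_zero) auto
    then show ?thesis using False by simp
  qed
  finally show ?thesis .
qed


lemma dim_Hm[simp]: "dim_row (Hm K Ks) = 2^K" "dim_col (Hm K Ks) = 2^K" by (simp_all add: Hm_def)
lemma dim_Hi[simp]: "dim_row (Hi K Ks) = 2^K" "dim_col (Hi K Ks) = 2^K" by (simp_all add: Hi_def)
lemma Hm_carrier: "Hm K Ks \<in> carrier_mat (2^K) (2^K)" by (simp add: Hm_def)
lemma Hi_carrier: "Hi K Ks \<in> carrier_mat (2^K) (2^K)" by (simp add: Hi_def)

lemma HHi: assumes "KsOK K Ks" shows "Hm K Ks * Hi K Ks = 1\<^sub>m (2^K)"
proof (rule eq_matI)
  fix x y assume "x < dim_row (1\<^sub>m (2^K) :: real mat)" "y < dim_col (1\<^sub>m (2^K) :: real mat)"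
  then have xy: "x < 2^K" "y < 2^K" by auto
  have "(Hm K Ks * Hi K Ks) $$ (x,y) = (\<Sum>c<2^K. Hm K Ks $$ (x,c) * Hm K Ks $$ (y,c)) / 2^K"
    using xy by (simp add: scalar_prod_def Hi_def sum_divide_distrib atLeast0LessThan)
  also have "\<dots> = (1\<^sub>m (2^K) :: real mat) $$ (x,y)" using HH[OF assms xy] xy by simp
  finally show "(Hm K Ks * Hi K Ks) $$ (x,y) = (1\<^sub>m (2^K) :: real mat) $$ (x,y)" .
qed (auto simp: Hm_def Hi_def)

lemma top_Hi:
  assumes "K > 0" "m < length Ks" "a < 2^K" "KsOK K Ks"
  shows "2 * Hi K Ks $$ (Suc m, a) = contrast_mat K Ks $$ (m,a)"
proof -
  have "Suc m < 2^K" using len_Ks[OF assms(4)] assms(2) by simp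
  have "(2::real) ^ K = 2 * 2^(K-1)" using assms(1) by (cases K) auto
  then show ?thesis using assms \<open>Suc m < 2^K\<close> by (simp add: Hi_def Hm_def contrast_mat_def)
qed

lemma tind_unique:
  assumes "\<forall>k<K. Z i k = 1 \<or> Z i k = -1"
  obtains q0 where "q0 < 2^K" "\<forall>k<K. zlev K q0 k = Z i k"
    "\<And>q. q < 2^K \<Longrightarrow> tind K Z i q = (if q = q0 then 1 else 0)"
proof -
  obtain q0 where q0: "q0 < 2^K" "\<forall>k<K. zlev K q0 k = Z i k" using zlev_surj[of K "Z i"] assms by blast
  have "tind K Z i q = (if q = q0 then 1 else 0)" if "q < 2^K" for q
  proof (cases "q = q0")
    case True then show ?thesis using q0 by (simp add: tind_def)
  next
    case False
    have "\<not>(\<forall>k<K. zlev K q k = zlev K q0 k)" using zlev_inj[OF that q0(1)] False by blast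
    then have "\<not> (\<forall>k<K. Z i k = zlev K q k)" using q0(2) by auto
    then show ?thesis using False by (simp add: tind_def)
  qed
  then show ?thesis using that q0 by blast
qed

lemma key_sum:
  assumes "KsOK K Ks" "\<forall>k<K. Z i k = 1 \<or> Z i k = -1" "c < 2^K"
  shows "(\<Sum>q<2^K. tind K Z i q * Hm K Ks $$ (q,c)) = (if c = 0 then 1 else Zprod Z i (Ks!(c-1)))"
proof -
  obtain q0 where q0: "q0 < 2^K" "\<forall>k<K. zlev K q0 k = Z i k"
    "\<And>q. q < 2^K \<Longrightarrow> tind K Z i q = (if q = q0 then 1 else 0)"
    using tind_unique[of K Z i] assms(2) by blast
  have "(\<Sum>q<2^K. tind K Z i q * Hm K Ks $$ (q,c)) = (\<Sum>q<2^K. if q = q0 then Hm K Ks $$ (q,c) else 0)"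
    using q0(3) by (intro sum.cong) auto
  also have "\<dots> = Hm K Ks $$ (q0,c)" using q0(1) by simp
  also have "\<dots> = (if c = 0 then 1 else Zprod Z i (Ks!(c-1)))"
  proof (cases "c = 0")
    case False
    have "c - 1 < length Ks" using len_Ks[OF assms(1)] assms(3) False by simp
    then have "Ks!(c-1) \<subseteq> {0..<K}" using assms(1) nth_mem unfolding KsOK_def by blast
    then have "(\<Prod>k\<in>Ks!(c-1). zlev K q0 k) = Zprod Z i (Ks!(c-1))"
      unfolding Zprod_def using q0(2) by (intro prod.cong) auto
    then show ?thesis using False q0(1) assms(3) by (simp add: Hm_def)
  qed (use q0(1) assms(3) in \<open>simp add: Hm_def\<close>)
  finally show ?thesis .
qed




lemma mat_inverse_eq:
  fixes A M :: "'a::field mat"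
  assumes A: "A \<in> carrier_mat n n" and M: "M \<in> carrier_mat n n" and AM: "A * M = 1\<^sub>m n"
  shows "mat_inverse A = Some M"
proof -
  have "det A * det M = 1" using det_mult[OF A M] AM by simp
  then have "det A \<noteq> 0" by auto
  from det_non_zero_imp_unit[OF A this, of "()"]
  have "A \<in> Units (ring_mat TYPE('a) n ())" .
  then have "mat_inverse A \<noteq> None" using mat_inverse(1)[OF A, of "()"] by blast
  then obtain B where B: "mat_inverse A = Some B" by auto
  from mat_inverse(2)[OF A B] have BA: "B * A = 1\<^sub>m n" and Bc: "B \<in> carrier_mat n n" by auto
  have "B = B * (A * M)" using AM Bc by simp
  also have "\<dots> = (B * A) * M" using A M Bc by simp
  also have "\<dots> = M" using BA M by simp
  finally show ?thesis using B by simp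
qed

lemma inv_cancel:
  fixes A B C :: "'a::comm_ring_1 mat"
  assumes "A \<in> carrier_mat n n" "B \<in> carrier_mat n n" "A * B = 1\<^sub>m n" "C \<in> carrier_mat n m"
  shows "A * (B * C) = C"
  by (subst assoc_mult_mat[OF assms(1,2,4), symmetric]) (simp add: assms(3) left_mult_one_mat[OF assms(4)])

lemma inv_cancel_v:
  fixes A B :: "'a::comm_ring_1 mat"
  assumes "A \<in> carrier_mat n n" "B \<in> carrier_mat n n" "A * B = 1\<^sub>m n" "v \<in> carrier_vec n"
  shows "A *\<^sub>v (B *\<^sub>v v) = v"
  by (subst assoc_mult_mat_vec[OF assms(1,2,4), symmetric]) (simp add: assms)

lemma ols_trans:
  fixes X B Bi :: "real mat"
  assumes X: "X \<in> carrier_mat N p" and B: "B \<in> carrier_mat p p" and Bi: "Bi \<in> carrier_mat p p"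
    and BBi: "B * Bi = 1\<^sub>m p" and inv: "invertible_mat (transpose_mat X * X)"
    and y: "y \<in> carrier_vec N"
  shows "ols_coef (X * B) y = Bi *\<^sub>v ols_coef X y"
    and "ehw_cov (X * B) y = Bi * ehw_cov X y * transpose_mat Bi"
proof -
  define G where "G = transpose_mat X * X"
  have G: "G \<in> carrier_mat p p" using X by (simp add: G_def)
  obtain Gi where "inverts_mat G Gi" "inverts_mat Gi G"
    using inv unfolding invertible_mat_def G_def by blast
  then have GGi: "G * Gi = 1\<^sub>m p" and e2: "Gi * G = 1\<^sub>m (dim_row Gi)" using G
    unfolding inverts_mat_def by auto
  have "dim_col (G * Gi) = dim_col (1\<^sub>m p :: real mat)" using GGi by simp
  then have d1: "dim_col Gi = p" by simp
  have "dim_col (Gi * G) = dim_col (1\<^sub>m (dim_row Gi) :: real mat)" using e2 by simp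
  then have d2: "dim_row Gi = p" using G by simp
  have Gi: "Gi \<in> carrier_mat p p" using d1 d2 by auto
  have gX: "gram_inv X = Gi" unfolding gram_inv_def using mat_inverse_eq[OF G Gi GGi] G_def by simp
  have BiB: "Bi * B = 1\<^sub>m p" using mat_mult_left_right_inverse[OF B Bi BBi] .
  have BtBit: "transpose_mat B * transpose_mat Bi = 1\<^sub>m p"
    using transpose_mult[OF Bi B, symmetric] BiB by simp
  have BitBt: "transpose_mat Bi * transpose_mat B = 1\<^sub>m p"
    using transpose_mult[OF B Bi, symmetric] BBi by simp
  have Bt: "transpose_mat B \<in> carrier_mat p p" and Bit: "transpose_mat Bi \<in> carrier_mat p p"
    and Xt: "transpose_mat X \<in> carrier_mat p N" using B Bi X by auto
  note c = inv_cancel[OF B Bi BBi] inv_cancel[OF Bt Bit BtBit] inv_cancel[OF Bit Bt BitBt]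
    inv_cancel[OF G Gi GGi]
  note cv = inv_cancel_v[OF B Bi BBi] inv_cancel_v[OF Bit Bt BitBt]
  have tXB: "transpose_mat (X * B) = transpose_mat B * transpose_mat X"
    using transpose_mult[OF X B] .
  define M where "M = Bi * (Gi * transpose_mat Bi)"
  have Mc: "M \<in> carrier_mat p p" using Bi Gi by (simp add: M_def)
  have XtXB: "transpose_mat X * (X * B) = G * B" unfolding G_def using Xt X B by simp
  have G': "transpose_mat (X * B) * (X * B) = transpose_mat B * (G * B)"
    unfolding tXB using assoc_mult_mat[OF Bt Xt, of "X*B" p] X B XtXB by simp
  have GBc: "G * B \<in> carrier_mat p p" using G B by simp
  have GiBit: "Gi * transpose_mat Bi \<in> carrier_mat p p" using Gi Bit by simp
  have BiGi: "Bi * (Gi * transpose_mat Bi) \<in> carrier_mat p p" using Bi GiBit by simp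
  have "transpose_mat (X * B) * (X * B) * M = transpose_mat B * ((G * B) * M)"
    unfolding G' using Bt GBc Mc by simp
  also have "(G * B) * M = G * (B * M)" using G B Mc by simp
  also have "B * M = Gi * transpose_mat Bi" unfolding M_def using c(1)[OF GiBit] .
  also have "G * (Gi * transpose_mat Bi) = transpose_mat Bi" using c(4)[OF Bit] .
  finally have GM: "transpose_mat (X * B) * (X * B) * M = 1\<^sub>m p" using BtBit by simp
  then have gXB: "gram_inv (X * B) = M"
  proof -
    have XBc: "X * B \<in> carrier_mat N p" using mult_carrier_mat[OF X B] .
    then have "transpose_mat (X * B) \<in> carrier_mat p N" by simp
    from mult_carrier_mat[OF this XBc]
    have "transpose_mat (X * B) * (X * B) \<in> carrier_mat p p" .
    from mat_inverse_eq[OF this Mc] show ?thesis using GM unfolding gram_inv_def by simp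
  qed
  define w where "w = transpose_mat X *\<^sub>v y"
  have w: "w \<in> carrier_vec p" using Xt y by (simp add: w_def)
  have "(transpose_mat B * transpose_mat X) *\<^sub>v y = transpose_mat B *\<^sub>v w"
    unfolding w_def using assoc_mult_mat_vec[OF Bt Xt y] .
  moreover have "(Bi * (Gi * transpose_mat Bi)) *\<^sub>v (transpose_mat B *\<^sub>v w)
      = Bi *\<^sub>v (Gi *\<^sub>v w)"
  proof -
    have a: "(Bi * (Gi * transpose_mat Bi)) *\<^sub>v (transpose_mat B *\<^sub>v w)
       = Bi *\<^sub>v ((Gi * transpose_mat Bi) *\<^sub>v (transpose_mat B *\<^sub>v w))"
      using assoc_mult_mat_vec[OF Bi GiBit] Bt w by simp
    have b: "(Gi * transpose_mat Bi) *\<^sub>v (transpose_mat B *\<^sub>v w)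
       = Gi *\<^sub>v (transpose_mat Bi *\<^sub>v (transpose_mat B *\<^sub>v w))"
      using assoc_mult_mat_vec[OF Gi Bit] Bt w by simp
    show ?thesis unfolding a b cv(2)[OF w] ..
  qed
  ultimately show co: "ols_coef (X * B) y = Bi *\<^sub>v ols_coef X y"
    unfolding ols_coef_def gXB gX tXB M_def w_def by simp
  have cX: "ols_coef X y \<in> carrier_vec p" unfolding ols_coef_def gX using Gi w w_def by simp
  have re: "ols_resid (X * B) y = ols_resid X y"
    unfolding ols_resid_def co using assoc_mult_mat_vec[OF X B] cv(1)[OF cX] Bi cX by simp
  define D where "D = mat N N (\<lambda>(i,j). if i = j then (ols_resid X y $ i)\<^sup>2 else 0)"
  have D: "D \<in> carrier_mat N N" by (simp add: D_def)
  define W where "W = transpose_mat X * D * X"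
  have W: "W \<in> carrier_mat p p" using Xt D X by (simp add: W_def)
  have XtD: "transpose_mat X * D \<in> carrier_mat p N" using Xt D by simp
  have s1: "transpose_mat (X * B) * D * (X * B) = transpose_mat B * (W * B)"
  proof -
    have "transpose_mat (X * B) * D = transpose_mat B * (transpose_mat X * D)"
      unfolding tXB using Bt Xt D by simp
    moreover have "(transpose_mat B * (transpose_mat X * D)) * (X * B)
       = transpose_mat B * ((transpose_mat X * D) * (X * B))"
      using assoc_mult_mat[OF Bt XtD, of "X*B" p] X B by simp
    moreover have "(transpose_mat X * D) * (X * B) = W * B"
      unfolding W_def using assoc_mult_mat[OF XtD X B] by simp
    ultimately show ?thesis by simp
  qed
  have MBt: "M * transpose_mat B = Bi * Gi"
  proof -
    have "M * transpose_mat B = Bi * ((Gi * transpose_mat Bi) * transpose_mat B)"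
      unfolding M_def using assoc_mult_mat[OF Bi GiBit Bt] .
    also have "(Gi * transpose_mat Bi) * transpose_mat B = Gi"
      using assoc_mult_mat[OF Gi Bit Bt] BitBt Gi by simp
    finally show ?thesis .
  qed
  have BM: "B * M = Gi * transpose_mat Bi" unfolding M_def using c(1)[OF GiBit] .
  have WBc: "W * B \<in> carrier_mat p p" using W B by simp
  have BiGic: "Bi * Gi \<in> carrier_mat p p" using Bi Gi by simp
  have "M * (transpose_mat B * (W * B)) * M = (Bi * Gi) * (W * (Gi * transpose_mat Bi))"
  proof -
    have "M * (transpose_mat B * (W * B)) = (M * transpose_mat B) * (W * B)"
      using assoc_mult_mat[OF Mc Bt WBc] by simp
    also have "\<dots> * M = (Bi * Gi) * ((W * B) * M)"
      unfolding MBt using assoc_mult_mat[OF BiGic WBc Mc] .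
    also have "(W * B) * M = W * (Gi * transpose_mat Bi)"
      using assoc_mult_mat[OF W B Mc] BM by simp
    finally show ?thesis .
  qed
  moreover have "Bi * (Gi * W * Gi) * transpose_mat Bi = (Bi * Gi) * (W * (Gi * transpose_mat Bi))"
  proof -
    have GWG: "Gi * W * Gi \<in> carrier_mat p p" using Gi W by simp
    have "Bi * (Gi * W * Gi) * transpose_mat Bi = Bi * ((Gi * W * Gi) * transpose_mat Bi)"
      using assoc_mult_mat[OF Bi GWG Bit] .
    also have "(Gi * W * Gi) * transpose_mat Bi = Gi * (W * (Gi * transpose_mat Bi))"
      using assoc_mult_mat[OF Gi W Gi] assoc_mult_mat[OF _ Gi Bit, of "Gi * W" p]
        assoc_mult_mat[OF Gi W GiBit] Gi W by simp
    also have "Bi * (Gi * (W * (Gi * transpose_mat Bi))) = (Bi * Gi) * (W * (Gi * transpose_mat Bi))"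
      using assoc_mult_mat[OF Bi Gi, of "W * (Gi * transpose_mat Bi)" p] W GiBit by simp
    finally show ?thesis .
  qed
  ultimately show "ehw_cov (X * B) y = Bi * ehw_cov X y * transpose_mat Bi"
    unfolding ehw_cov_def Let_def re gXB gX
    using s1 X B by (simp add: D_def[symmetric] W_def[symmetric] M_def[symmetric])
qed




lemma sum_if_less:
  assumes "Q \<le> (p::nat)"
  shows "(\<Sum>a<p. (if a < Q then f a else 0)) = (\<Sum>a<Q. f a)"
proof -
  have "(\<Sum>a<p. (if a < Q then f a else 0)) = (\<Sum>a<p. (if a \<in> {..<Q} then f a else 0))" by simp
  also have "\<dots> = sum f ({..<p} \<inter> {..<Q})" by (rule sum.inter_restrict[symmetric]) simp
  also have "{..<p} \<inter> {..<Q} = {..<Q}" using assms by auto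
  finally show ?thesis .
qed

lemma assemble_vec:
  fixes Bi C :: "real mat"
  assumes Bi: "Bi \<in> carrier_mat p p" and C: "C \<in> carrier_mat P Q" and QP: "Q \<le> p" "P < Q"
    and top: "\<forall>m<P. \<forall>a<p. 2 * Bi $$ (Suc m, a) = (if a < Q then C $$ (m,a) else 0)"
    and c: "c \<in> carrier_vec p"
  shows "2 \<cdot>\<^sub>v subvec 1 P (Bi *\<^sub>v c) = C *\<^sub>v subvec 0 Q c"
proof (rule eq_vecI)
  show "dim_vec (2 \<cdot>\<^sub>v subvec 1 P (Bi *\<^sub>v c)) = dim_vec (C *\<^sub>v subvec 0 Q c)"
    using C by (simp add: subvec_def)
  fix i assume "i < dim_vec (C *\<^sub>v subvec 0 Q c)"
  then have i: "i < P" using C by simp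
  have "(2 \<cdot>\<^sub>v subvec 1 P (Bi *\<^sub>v c)) $ i = (\<Sum>a<p. (2 * Bi $$ (Suc i, a)) * c $ a)"
    using i QP Bi c by (simp add: subvec_def scalar_prod_def sum_distrib_left mult.assoc atLeast0LessThan)
  also have "\<dots> = (\<Sum>a<p. (if a < Q then C $$ (i,a) * c $ a else 0))"
    using top i by (intro sum.cong) auto
  also have "\<dots> = (\<Sum>a<Q. C $$ (i,a) * c $ a)" using sum_if_less[OF QP(1)] .
  also have "\<dots> = (C *\<^sub>v subvec 0 Q c) $ i"
    using i C by (simp add: subvec_def scalar_prod_def atLeast0LessThan)
  finally show "(2 \<cdot>\<^sub>v subvec 1 P (Bi *\<^sub>v c)) $ i = (C *\<^sub>v subvec 0 Q c) $ i" .
qed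

lemma assemble_mat:
  fixes Bi C Psi :: "real mat"
  assumes Bi: "Bi \<in> carrier_mat p p" and C: "C \<in> carrier_mat P Q" and QP: "Q \<le> p" "P < Q"
    and top: "\<forall>m<P. \<forall>a<p. 2 * Bi $$ (Suc m, a) = (if a < Q then C $$ (m,a) else 0)"
    and Psi: "Psi \<in> carrier_mat p p"
  shows "4 \<cdot>\<^sub>m subblock 1 P (Bi * Psi * transpose_mat Bi) = C * subblock 0 Q Psi * transpose_mat C"
proof (rule eq_matI)
  show "dim_row (4 \<cdot>\<^sub>m subblock 1 P (Bi * Psi * transpose_mat Bi)) = dim_row (C * subblock 0 Q Psi * transpose_mat C)"
    using C by (simp add: subblock_def)
  show "dim_col (4 \<cdot>\<^sub>m subblock 1 P (Bi * Psi * transpose_mat Bi)) = dim_col (C * subblock 0 Q Psi * transpose_mat C)"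
    using C by (simp add: subblock_def)
  fix i j assume "i < dim_row (C * subblock 0 Q Psi * transpose_mat C)" "j < dim_col (C * subblock 0 Q Psi * transpose_mat C)"
  then have i: "i < P" and j: "j < P" using C by auto
  have "(4 \<cdot>\<^sub>m subblock 1 P (Bi * Psi * transpose_mat Bi)) $$ (i,j)
      = (\<Sum>b<p. (\<Sum>a<p. (2 * Bi $$ (Suc i, a)) * Psi $$ (a,b)) * (2 * Bi $$ (Suc j, b)))"
    using i j QP Bi Psi by (simp add: subblock_def scalar_prod_def sum_distrib_left sum_distrib_right
        mult.assoc mult.left_commute atLeast0LessThan) (rule sum.swap)
  also have "\<dots> = (\<Sum>b<p. if b < Q then (\<Sum>a<Q. C $$ (i,a) * Psi $$ (a,b)) * C $$ (j,b) else 0)"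
  proof (intro sum.cong refl)
    fix b assume "b \<in> {..<p}"
    have "(\<Sum>a<p. (2 * Bi $$ (Suc i, a)) * Psi $$ (a,b)) = (\<Sum>a<p. if a < Q then C $$ (i,a) * Psi $$ (a,b) else 0)"
      using top i by (intro sum.cong) auto
    also have "\<dots> = (\<Sum>a<Q. C $$ (i,a) * Psi $$ (a,b))" using sum_if_less[OF QP(1)] .
    finally show "(\<Sum>a<p. (2 * Bi $$ (Suc i, a)) * Psi $$ (a,b)) * (2 * Bi $$ (Suc j, b))
      = (if b < Q then (\<Sum>a<Q. C $$ (i,a) * Psi $$ (a,b)) * C $$ (j,b) else 0)"
      using top j \<open>b \<in> {..<p}\<close> by auto
  qed
  also have "\<dots> = (\<Sum>b<Q. (\<Sum>a<Q. C $$ (i,a) * Psi $$ (a,b)) * C $$ (j,b))" using sum_if_less[OF QP(1)] .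
  also have "\<dots> = (C * subblock 0 Q Psi * transpose_mat C) $$ (i,j)"
    using i j C by (simp add: subblock_def scalar_prod_def atLeast0LessThan)
  finally show "(4 \<cdot>\<^sub>m subblock 1 P (Bi * Psi * transpose_mat Bi)) $$ (i,j) = (C * subblock 0 Q Psi * transpose_mat C) $$ (i,j)" .
qed




lemma sum_split: "(\<Sum>a<(Q::nat)+J. f a) = (\<Sum>a<Q. f a) + (\<Sum>b<J. f (Q+b))"
  by (induction J) (auto simp: add.assoc)

definition BA :: "nat \<Rightarrow> nat set list \<Rightarrow> nat \<Rightarrow> real mat" where
  "BA K Ks J = four_block_mat (Hm K Ks) (0\<^sub>m (2^K) J) (0\<^sub>m J (2^K)) (1\<^sub>m J)"
definition BAi :: "nat \<Rightarrow> nat set list \<Rightarrow> nat \<Rightarrow> real mat" where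
  "BAi K Ks J = four_block_mat (Hi K Ks) (0\<^sub>m (2^K) J) (0\<^sub>m J (2^K)) (1\<^sub>m J)"

lemma BA_carrier: "BA K Ks J \<in> carrier_mat (2^K + J) (2^K + J)"
  unfolding BA_def by (rule four_block_carrier_mat) (auto simp: Hm_carrier)
lemma BAi_carrier: "BAi K Ks J \<in> carrier_mat (2^K + J) (2^K + J)"
  unfolding BAi_def by (rule four_block_carrier_mat) (auto simp: Hi_carrier)

lemma BA_inv: assumes "KsOK K Ks" shows "BA K Ks J * BAi K Ks J = 1\<^sub>m (2^K + J)"
  unfolding BA_def BAi_def
  by (subst mult_four_block_mat[OF Hm_carrier _ _ _ Hi_carrier])
     (auto simp: HHi[OF assms] Hm_carrier Hi_carrier)

lemma BA_top:
  assumes "K > 0" "KsOK K Ks" "m < length Ks" "a < 2^K + J"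
  shows "2 * BAi K Ks J $$ (Suc m, a) = (if a < 2^K then contrast_mat K Ks $$ (m,a) else 0)"
proof -
  have "Suc m < 2^K" using len_Ks[OF assms(2)] assms(3) by simp
  then show ?thesis using assms top_Hi[OF assms(1,3) _ assms(2)] by (simp add: BAi_def)
qed

lemma XA:
  assumes "KsOK K Ks" "\<forall>i<N. \<forall>k<K. Z i k = 1 \<or> Z i k = -1"
  shows "fact_design Addit K Ks N J Z x = treat_design Addit K N J Z x * BA K Ks J"
proof (rule eq_matI)
  have P: "length Ks = 2^K - 1" using len_Ks[OF assms(1)] .
  have Q: "(2::nat)^K > 0" by simp
  have XT: "treat_design Addit K N J Z x \<in> carrier_mat N (2^K + J)"
    by (simp add: treat_design_def Let_def)
  have XTi: "treat_design Addit K N J Z x $$ (i,a) = (if a < 2^K then tind K Z i a else x i (a - 2^K))"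
    if "i < N" "a < 2^K + J" for i a using that by (simp add: treat_design_def Let_def)
  have BAi: "BA K Ks J $$ (a,c) = (if a < 2^K then if c < 2^K then Hm K Ks $$ (a,c) else 0
      else if c < 2^K then 0 else (if a = c then 1 else 0))"
    if "a < 2^K + J" "c < 2^K + J" for a c using that by (auto simp: BA_def)
  show "dim_row (fact_design Addit K Ks N J Z x) = dim_row (treat_design Addit K N J Z x * BA K Ks J)"
    using XT by (simp add: fact_design_def Let_def)
  show "dim_col (fact_design Addit K Ks N J Z x) = dim_col (treat_design Addit K N J Z x * BA K Ks J)"
    using XT BA_carrier[of K Ks J] P Q by (simp add: fact_design_def Let_def)
  fix i c assume "i < dim_row (treat_design Addit K N J Z x * BA K Ks J)"
    "c < dim_col (treat_design Addit K N J Z x * BA K Ks J)"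
  then have i: "i < N" and c: "c < 2^K + J" using XT BA_carrier[of K Ks J] by auto
  have "(treat_design Addit K N J Z x * BA K Ks J) $$ (i,c)
     = (\<Sum>a<2^K + J. treat_design Addit K N J Z x $$ (i,a) * BA K Ks J $$ (a,c))"
    using i c XT BA_carrier[of K Ks J] by (simp add: scalar_prod_def atLeast0LessThan)
  also have "\<dots> = (\<Sum>a<2^K. tind K Z i a * BA K Ks J $$ (a,c))
      + (\<Sum>b<J. x i b * BA K Ks J $$ (2^K + b, c))"
    unfolding sum_split using XTi i by simp
  also have "\<dots> = fact_design Addit K Ks N J Z x $$ (i,c)"
  proof (cases "c < 2^K")
    case True
    have "(\<Sum>a<2^K. tind K Z i a * BA K Ks J $$ (a,c)) = (\<Sum>a<2^K. tind K Z i a * Hm K Ks $$ (a,c))"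
      using BAi True c by (intro sum.cong) auto
    also have "\<dots> = (if c = 0 then 1 else Zprod Z i (Ks!(c-1)))"
      using key_sum[OF assms(1) _ True] assms(2) i by blast
    moreover have "c \<le> 2^K - Suc 0" using True by linarith
    ultimately show ?thesis using True i c BAi P Q by (simp add: fact_design_def Let_def)
  next
    case False
    define b' where "b' = c - 2^K"
    have b': "c = 2^K + b'" "b' < J" using c False unfolding b'_def by linarith+
    have "(\<Sum>a<2^K. tind K Z i a * BA K Ks J $$ (a,c)) = 0"
      using BAi False c by (intro sum.neutral) auto
    moreover have "(\<Sum>b<J. x i b * BA K Ks J $$ (2^K + b, c)) = (\<Sum>b<J. if b = b' then x i b' else 0)"
      using BAi b' by (intro sum.cong) auto
    moreover have "\<not> c \<le> 2^K - Suc 0" "c - Suc 0 - (2^K - Suc 0) = b'" "c \<noteq> 0"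
      using b' Q by linarith+
    ultimately show ?thesis using b' i P Q by (simp add: fact_design_def Let_def)
  qed
  finally show "fact_design Addit K Ks N J Z x $$ (i,c) = (treat_design Addit K N J Z x * BA K Ks J) $$ (i,c)" ..
qed




lemma dm: assumes "j < (J::nat)" shows "(q*J+j) div J = q" "(q*J+j) mod J = j"
  using assms by auto

lemma sum_prod_idx: "(\<Sum>a<(Q::nat)*J. f a) = (\<Sum>q<Q. \<Sum>j<J. f (q*J+j))"
proof (induction Q)
  case (Suc Q)
  have "(\<Sum>a<Suc Q*J. f a) = (\<Sum>a<Q*J + J. f a)" by (simp add: add.commute)
  also have "\<dots> = (\<Sum>a<Q*J. f a) + (\<Sum>b<J. f (Q*J+b))" by (rule sum_split)
  finally show ?case using Suc by simp
qed simp

definition Em :: "real mat \<Rightarrow> nat \<Rightarrow> real mat" where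
  "Em H J = mat (dim_row H * J) (dim_row H * J)
     (\<lambda>(a,b). if a mod J = b mod J then H $$ (a div J, b div J) else 0)"

lemma Em_carrier: "Em H J \<in> carrier_mat (dim_row H * J) (dim_row H * J)" by (simp add: Em_def)

lemma Em_inv:
  assumes H: "H \<in> carrier_mat n n" and G: "G \<in> carrier_mat n n" and HG: "H * G = 1\<^sub>m n"
  shows "Em H J * Em G J = (1\<^sub>m (n * J) :: real mat)"
proof -
  have dH: "dim_row H = n" and dG: "dim_row G = n" using H G by auto
  have dE: "dim_row (Em H J) = n * J" "dim_col (Em G J) = n * J" unfolding Em_def dH dG by simp_all
  show ?thesis
proof (rule eq_matI)
  fix a b assume "a < dim_row (1\<^sub>m (n * J) :: real mat)" "b < dim_col (1\<^sub>m (n * J) :: real mat)"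
  then have a: "a < n*J" and b: "b < n*J" by auto
  then have J: "J > 0" by (cases "J = 0") auto
  have ad: "a div J < n" and bd: "b div J < n" using a b by (auto simp: less_mult_imp_div_less)
  have "(Em H J * Em G J) $$ (a,b) = (\<Sum>l<n*J. Em H J $$ (a,l) * Em G J $$ (l,b))"
    using a b H G by (simp add: Em_def scalar_prod_def atLeast0LessThan)
  also have "\<dots> = (\<Sum>q<n. \<Sum>j<J. Em H J $$ (a,q*J+j) * Em G J $$ (q*J+j,b))"
    by (rule sum_prod_idx)
  also have "\<dots> = (\<Sum>q<n. if a mod J = b mod J then H $$ (a div J, q) * G $$ (q, b div J) else 0)"
  proof (intro sum.cong refl)
    fix q assume q: "q \<in> {..<n}"
    have lt: "q*J+j < n*J" if "j < J" for j
    proof -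
      have "q*J+j < q*J + J" using that by simp
      also have "\<dots> = Suc q * J" by simp
      also have "\<dots> \<le> n*J" using q by (intro mult_right_mono) auto
      finally show ?thesis .
    qed
    have "(\<Sum>j<J. Em H J $$ (a,q*J+j) * Em G J $$ (q*J+j,b))
        = (\<Sum>j<J. if j = a mod J then (if a mod J = b mod J then H $$ (a div J, q) * G $$ (q, b div J) else 0) else 0)"
      using a b H G lt by (intro sum.cong refl) (auto simp: Em_def dm)
    also have "\<dots> = (if a mod J = b mod J then H $$ (a div J, q) * G $$ (q, b div J) else 0)"
      using J by simp
    finally show "(\<Sum>j<J. Em H J $$ (a,q*J+j) * Em G J $$ (q*J+j,b))
        = (if a mod J = b mod J then H $$ (a div J, q) * G $$ (q, b div J) else 0)" .
  qed
  also have "\<dots> = (if a mod J = b mod J then (H * G) $$ (a div J, b div J) else 0)"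
    using ad bd H G by (simp add: scalar_prod_def atLeast0LessThan)
  also have "\<dots> = (1\<^sub>m (n * J)) $$ (a,b)"
  proof -
    have "(a = b) = (a div J = b div J \<and> a mod J = b mod J)"
    proof
      assume "a div J = b div J \<and> a mod J = b mod J"
      then have "a div J * J + a mod J = b div J * J + b mod J" by simp
      then show "a = b" by simp
    qed simp
    then show ?thesis using ad bd a b HG by simp
  qed
  finally show "(Em H J * Em G J) $$ (a,b) = (1\<^sub>m (n * J)) $$ (a,b)" .
qed (simp_all add: dE)
qed




definition BI :: "nat \<Rightarrow> nat set list \<Rightarrow> nat \<Rightarrow> real mat" where
  "BI K Ks J = four_block_mat (Hm K Ks) (0\<^sub>m (2^K) (2^K*J)) (0\<^sub>m (2^K*J) (2^K)) (Em (Hm K Ks) J)"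
definition BIi :: "nat \<Rightarrow> nat set list \<Rightarrow> nat \<Rightarrow> real mat" where
  "BIi K Ks J = four_block_mat (Hi K Ks) (0\<^sub>m (2^K) (2^K*J)) (0\<^sub>m (2^K*J) (2^K)) (Em (Hi K Ks) J)"

lemma Em_Hm_carrier: "Em (Hm K Ks) J \<in> carrier_mat (2^K*J) (2^K*J)"
  using Em_carrier[of "Hm K Ks" J] by simp
lemma Em_Hi_carrier: "Em (Hi K Ks) J \<in> carrier_mat (2^K*J) (2^K*J)"
  using Em_carrier[of "Hi K Ks" J] by simp

lemma BI_carrier: "BI K Ks J \<in> carrier_mat (2^K + 2^K*J) (2^K + 2^K*J)"
  unfolding BI_def by (rule four_block_carrier_mat) (auto simp: Hm_carrier Em_Hm_carrier)
lemma BIi_carrier: "BIi K Ks J \<in> carrier_mat (2^K + 2^K*J) (2^K + 2^K*J)"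
  unfolding BIi_def by (rule four_block_carrier_mat) (auto simp: Hi_carrier Em_Hi_carrier)

lemma BI_inv: assumes "KsOK K Ks" shows "BI K Ks J * BIi K Ks J = 1\<^sub>m (2^K + 2^K*J)"
proof -
  have E: "Em (Hm K Ks) J * Em (Hi K Ks) J = 1\<^sub>m (2^K*J)"
    using Em_inv[OF Hm_carrier Hi_carrier HHi[OF assms]] .
  have z1: "0\<^sub>m (2^K) (2^K*J) * Em (Hi K Ks) J = (0\<^sub>m (2^K) (2^K*J) :: real mat)"
    by (rule left_mult_zero_mat[OF Em_Hi_carrier])
  have z2: "Em (Hm K Ks) J * 0\<^sub>m (2^K*J) (2^K) = (0\<^sub>m (2^K*J) (2^K) :: real mat)"
    by (rule right_mult_zero_mat[OF Em_Hm_carrier])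
  show ?thesis unfolding BI_def BIi_def
    by (subst mult_four_block_mat[OF Hm_carrier _ _ Em_Hm_carrier Hi_carrier _ _ Em_Hi_carrier])
       (auto simp: HHi[OF assms] E z1 z2 Hm_carrier Hi_carrier Em_Hm_carrier Em_Hi_carrier)
qed

lemma BI_top:
  assumes "K > 0" "KsOK K Ks" "m < length Ks" "a < 2^K + 2^K*J"
  shows "2 * BIi K Ks J $$ (Suc m, a) = (if a < 2^K then contrast_mat K Ks $$ (m,a) else 0)"
proof -
  have "Suc m < 2^K" using len_Ks[OF assms(2)] assms(3) by simp
  then show ?thesis using assms top_Hi[OF assms(1,3) _ assms(2)] Em_Hi_carrier[of K Ks J]
    by (simp add: BIi_def)
qed

lemma XI:
  assumes "KsOK K Ks" "\<forall>i<N. \<forall>k<K. Z i k = 1 \<or> Z i k = -1"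
  shows "fact_design Inter K Ks N J Z x = treat_design Inter K N J Z x * BI K Ks J"
proof (rule eq_matI)
  have P: "length Ks = 2^K - 1" using len_Ks[OF assms(1)] .
  have Q: "(2::nat)^K > 0" by simp
  have XT: "treat_design Inter K N J Z x \<in> carrier_mat N (2^K + 2^K*J)"
    by (simp add: treat_design_def Let_def)
  have XTi: "treat_design Inter K N J Z x $$ (i,a) = (if a < 2^K then tind K Z i a
      else tind K Z i ((a - 2^K) div J) * x i ((a - 2^K) mod J))"
    if "i < N" "a < 2^K + 2^K*J" for i a using that by (simp add: treat_design_def Let_def)
  have BIx: "BI K Ks J $$ (a,c) = (if a < 2^K then if c < 2^K then Hm K Ks $$ (a,c) else 0
      else if c < 2^K then 0 else Em (Hm K Ks) J $$ (a - 2^K, c - 2^K))"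
    if "a < 2^K + 2^K*J" "c < 2^K + 2^K*J" for a c using that Em_Hm_carrier[of K Ks J]
    by (simp add: BI_def)
  show "dim_row (fact_design Inter K Ks N J Z x) = dim_row (treat_design Inter K N J Z x * BI K Ks J)"
    using XT by (simp add: fact_design_def Let_def)
  show "dim_col (fact_design Inter K Ks N J Z x) = dim_col (treat_design Inter K N J Z x * BI K Ks J)"
    using XT BI_carrier[of K Ks J] P Q by (simp add: fact_design_def Let_def algebra_simps)
  fix i c assume "i < dim_row (treat_design Inter K N J Z x * BI K Ks J)"
    "c < dim_col (treat_design Inter K N J Z x * BI K Ks J)"
  then have i: "i < N" and c: "c < 2^K + 2^K*J" using XT BI_carrier[of K Ks J] by auto
  obtain Q' where Q': "(2::nat)^K = Suc Q'" using Q by (cases "(2::nat)^K") auto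
  have PQ': "length Ks = Q'" using P Q' by simp
  have cdim: "c < 1 + length Ks + J + length Ks * J" using c unfolding Q' PQ' by simp
  have FI: "fact_design Inter K Ks N J Z x $$ (i,c) = (if c = 0 then 1 else if c \<le> Q' then Zprod Z i (Ks!(c-1))
      else if c \<le> Q' + J then x i (c-1-Q') else Zprod Z i (Ks!((c-1-Q'-J) div J)) * x i ((c-1-Q'-J) mod J))"
    using i cdim unfolding PQ'[symmetric] by (simp add: fact_design_def Let_def)
  have "(treat_design Inter K N J Z x * BI K Ks J) $$ (i,c)
     = (\<Sum>a<2^K + 2^K*J. treat_design Inter K N J Z x $$ (i,a) * BI K Ks J $$ (a,c))"
    using i c XT BI_carrier[of K Ks J] by (simp add: scalar_prod_def atLeast0LessThan)
  also have "\<dots> = (\<Sum>a<2^K. tind K Z i a * BI K Ks J $$ (a,c))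
      + (\<Sum>b<2^K*J. (tind K Z i (b div J) * x i (b mod J)) * BI K Ks J $$ (2^K + b, c))"
    unfolding sum_split using XTi i by simp
  also have "\<dots> = fact_design Inter K Ks N J Z x $$ (i,c)"
  proof (cases "c < 2^K")
    case True
    have "(\<Sum>a<2^K. tind K Z i a * BI K Ks J $$ (a,c)) = (\<Sum>a<2^K. tind K Z i a * Hm K Ks $$ (a,c))"
      using BIx True c by (intro sum.cong) auto
    also have "\<dots> = (if c = 0 then 1 else Zprod Z i (Ks!(c-1)))"
      using key_sum[OF assms(1) _ True] assms(2) i by blast
    finally have s1: "(\<Sum>a<2^K. tind K Z i a * BI K Ks J $$ (a,c)) = (if c = 0 then 1 else Zprod Z i (Ks!(c-1)))" .
    have s2: "(\<Sum>b<2^K*J. (tind K Z i (b div J) * x i (b mod J)) * BI K Ks J $$ (2^K + b, c)) = 0"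
      using BIx True c by (intro sum.neutral) auto
    have "c \<le> Q'" using True Q' by linarith
    then show ?thesis unfolding FI using s1 s2 by simp
  next
    case False
    define b' where "b' = c - 2^K"
    have b': "c = 2^K + b'" "b' < 2^K*J" using c False unfolding b'_def by linarith+
    then have J: "J > 0" by (cases "J = 0") auto
    define d where "d = b' div J"
    define j' where "j' = b' mod J"
    have d: "d < 2^K" using b'(2) unfolding d_def by (simp add: less_mult_imp_div_less)
    have j': "j' < J" using J unfolding j'_def by simp
    have s1: "(\<Sum>a<2^K. tind K Z i a * BI K Ks J $$ (a,c)) = 0"
      using BIx False c by (intro sum.neutral) auto
    have "(\<Sum>b<2^K*J. (tind K Z i (b div J) * x i (b mod J)) * BI K Ks J $$ (2^K + b, c))
        = (\<Sum>q<2^K. \<Sum>j<J. (tind K Z i ((q*J+j) div J) * x i ((q*J+j) mod J)) * BI K Ks J $$ (2^K + (q*J+j), c))"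
      by (rule sum_prod_idx)
    also have "\<dots> = (\<Sum>q<2^K. tind K Z i q * Hm K Ks $$ (q, d) * x i j')"
    proof (intro sum.cong refl)
      fix q assume q: "q \<in> {..<(2::nat)^K}"
      have lt: "q*J+j < 2^K*J" if "j < J" for j
      proof -
        have "q*J+j < q*J + J" using that by simp
        also have "\<dots> = Suc q * J" by simp
        also have "\<dots> \<le> 2^K*J" using q by (intro mult_right_mono) auto
        finally show ?thesis .
      qed
      have "(\<Sum>j<J. (tind K Z i ((q*J+j) div J) * x i ((q*J+j) mod J)) * BI K Ks J $$ (2^K + (q*J+j), c))
         = (\<Sum>j<J. if j = j' then tind K Z i q * Hm K Ks $$ (q, d) * x i j' else 0)"
      proof (intro sum.cong refl)
        fix j assume j: "j \<in> {..<J}"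
        then have jJ: "j < J" by simp
        have "BI K Ks J $$ (2^K + (q*J+j), c) = Em (Hm K Ks) J $$ (q*J+j, b')"
          using BIx[of "2^K + (q*J+j)" c] lt[OF jJ] c False b' by simp
        also have "\<dots> = (if j = j' then Hm K Ks $$ (q, d) else 0)"
          using lt[OF jJ] b'(2) unfolding Em_def
          by (simp add: dm[OF jJ] dm[OF j'] d_def[symmetric] j'_def[symmetric] jJ j')
        finally show "(tind K Z i ((q*J+j) div J) * x i ((q*J+j) mod J)) * BI K Ks J $$ (2^K + (q*J+j), c)
          = (if j = j' then tind K Z i q * Hm K Ks $$ (q, d) * x i j' else 0)"
          using dm[OF jJ] by simp
      qed
      also have "\<dots> = tind K Z i q * Hm K Ks $$ (q, d) * x i j'" using j' by simp
      finally show "(\<Sum>j<J. (tind K Z i ((q*J+j) div J) * x i ((q*J+j) mod J)) * BI K Ks J $$ (2^K + (q*J+j), c))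
         = tind K Z i q * Hm K Ks $$ (q, d) * x i j'" .
    qed
    also have "\<dots> = (\<Sum>q<2^K. tind K Z i q * Hm K Ks $$ (q, d)) * x i j'"
      by (simp add: sum_distrib_right)
    also have "\<dots> = (if d = 0 then 1 else Zprod Z i (Ks!(d-1))) * x i j'"
      using key_sum[OF assms(1) _ d] assms(2) i by simp
    finally have s2: "(\<Sum>b<2^K*J. (tind K Z i (b div J) * x i (b mod J)) * BI K Ks J $$ (2^K + b, c))
       = (if d = 0 then 1 else Zprod Z i (Ks!(d-1))) * x i j'" .
    have c1: "c \<noteq> 0" "\<not> c \<le> Q'" "c - 1 - Q' = b'"
      using b' Q' by linarith+
    show ?thesis
    proof (cases "b' < J")
      case True
      then have "d = 0" "j' = b'" unfolding d_def j'_def by simp_all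
      moreover have "c \<le> Q' + J" using True b' Q' by linarith
      ultimately show ?thesis unfolding FI using s1 s2 c1 by simp
    next
      case False
      have "d \<noteq> 0" using False J unfolding d_def by (simp add: div_eq_0_iff)
      moreover have "(b' - J) div J = d - 1" "(b' - J) mod J = j'"
        using False J unfolding d_def j'_def by (simp_all add: le_div_geq le_mod_geq)
      moreover have "\<not> c \<le> Q' + J" "c - 1 - Q' - J = b' - J"
        using False b' Q' by linarith+
      ultimately show ?thesis unfolding FI using s1 s2 c1 by simp
    qed
  qed
  finally show "fact_design Inter K Ks N J Z x $$ (i,c) = (treat_design Inter K N J Z x * BI K Ks J) $$ (i,c)" ..
qed



lemma ols_carrier:
  fixes X :: "real mat"
  assumes X: "X \<in> carrier_mat N p" and inv: "invertible_mat (transpose_mat X * X)"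
    and y: "y \<in> carrier_vec N"
  shows "ols_coef X y \<in> carrier_vec p" "ehw_cov X y \<in> carrier_mat p p"
proof -
  define G where "G = transpose_mat X * X"
  have G: "G \<in> carrier_mat p p" using X by (simp add: G_def)
  obtain Gi where "inverts_mat G Gi" "inverts_mat Gi G"
    using inv unfolding invertible_mat_def G_def by blast
  then have GGi: "G * Gi = 1\<^sub>m p" and e2: "Gi * G = 1\<^sub>m (dim_row Gi)" using G
    unfolding inverts_mat_def by auto
  have "dim_col (G * Gi) = dim_col (1\<^sub>m p :: real mat)" using GGi by simp
  then have d1: "dim_col Gi = p" by simp
  have "dim_col (Gi * G) = dim_col (1\<^sub>m (dim_row Gi) :: real mat)" using e2 by simp
  then have d2: "dim_row Gi = p" using G by simp
  have Gi: "Gi \<in> carrier_mat p p" using d1 d2 by auto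
  have gX: "gram_inv X = Gi" unfolding gram_inv_def using mat_inverse_eq[OF G Gi GGi] G_def by simp
  have "transpose_mat X *\<^sub>v y \<in> carrier_vec p" using X y by simp
  then show "ols_coef X y \<in> carrier_vec p" unfolding ols_coef_def gX by (rule mult_mat_vec_carrier[OF Gi])
  have Xt: "transpose_mat X \<in> carrier_mat p N" using X by simp
  have D: "mat (dim_row X) (dim_row X) (\<lambda>(i,j). if i = j then (ols_resid X y $ i)\<^sup>2 else 0) \<in> carrier_mat N N"
    using X by simp
  have W: "transpose_mat X * mat (dim_row X) (dim_row X) (\<lambda>(i,j). if i = j then (ols_resid X y $ i)\<^sup>2 else 0) * X
      \<in> carrier_mat p p"
    by (rule mult_carrier_mat[OF mult_carrier_mat[OF Xt D] X])
  show "ehw_cov X y \<in> carrier_mat p p" unfolding ehw_cov_def Let_def gX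
    by (rule mult_carrier_mat[OF mult_carrier_mat[OF Gi W] Gi])
qed

lemma main_generic:
  fixes XT XF B Bi :: "real mat"
  assumes K: "K > 0" and Ks: "KsOK K Ks"
    and XT: "XT \<in> carrier_mat N p" and XF: "XF = XT * B"
    and B: "B \<in> carrier_mat p p" and Bi: "Bi \<in> carrier_mat p p" and BBi: "B * Bi = 1\<^sub>m p"
    and inv: "invertible_mat (transpose_mat XT * XT)" and Qp: "2^K \<le> p"
    and top: "\<forall>m<length Ks. \<forall>a<p. 2 * Bi $$ (Suc m, a) = (if a < 2^K then contrast_mat K Ks $$ (m,a) else 0)"
    and y: "y \<in> carrier_vec N"
  shows "2 \<cdot>\<^sub>v subvec 1 (length Ks) (ols_coef XF y) = contrast_mat K Ks *\<^sub>v subvec 0 (2^K) (ols_coef XT y)"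
    and "4 \<cdot>\<^sub>m subblock 1 (length Ks) (ehw_cov XF y)
       = contrast_mat K Ks * subblock 0 (2^K) (ehw_cov XT y) * transpose_mat (contrast_mat K Ks)"
proof -
  have C: "contrast_mat K Ks \<in> carrier_mat (length Ks) (2^K)" by (simp add: contrast_mat_def)
  have PQ: "length Ks < 2^K" using len_Ks[OF Ks] by simp
  note tr = ols_trans[OF XT B Bi BBi inv y]
  note oc = ols_carrier[OF XT inv y]
  show "2 \<cdot>\<^sub>v subvec 1 (length Ks) (ols_coef XF y) = contrast_mat K Ks *\<^sub>v subvec 0 (2^K) (ols_coef XT y)"
    unfolding XF tr(1) by (rule assemble_vec[OF Bi C Qp PQ top oc(1)])
  show "4 \<cdot>\<^sub>m subblock 1 (length Ks) (ehw_cov XF y)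
       = contrast_mat K Ks * subblock 0 (2^K) (ehw_cov XT y) * transpose_mat (contrast_mat K Ks)"
    unfolding XF tr(2) by (rule assemble_mat[OF Bi C Qp PQ top oc(2)])
qed

lemma main_addit:
  assumes K: "K > 0" and Ks: "KsOK K Ks"
    and Z: "\<forall>i<N. \<forall>k<K. Z i k = 1 \<or> Z i k = -1"
    and inv: "invertible_mat (transpose_mat (treat_design Addit K N J Z x) * treat_design Addit K N J Z x)"
  shows "tautilde Addit K Ks N J Z x Y = contrast_mat K Ks *\<^sub>v Yhat Addit K N J Z x Y
       \<and> Omegatilde Addit K Ks N J Z x Y
           = contrast_mat K Ks * Psihat Addit K N J Z x Y * transpose_mat (contrast_mat K Ks)"
proof -
  have XT: "treat_design Addit K N J Z x \<in> carrier_mat N (2^K + J)"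
    by (simp add: treat_design_def Let_def)
  have top: "\<forall>m<length Ks. \<forall>a<2^K + J. 2 * BAi K Ks J $$ (Suc m, a) = (if a < 2^K then contrast_mat K Ks $$ (m,a) else 0)"
    using BA_top[OF K Ks] by blast
  have Qp: "2^K \<le> 2^K + J" by simp
  have y: "vec N Y \<in> carrier_vec N" by simp
  note g = main_generic[OF K Ks XT XA[OF Ks Z] BA_carrier BAi_carrier BA_inv[OF Ks] inv Qp top y]
  show ?thesis unfolding tautilde_def Omegatilde_def Yhat_def Psihat_def using g(1) g(2) by (rule conjI)
qed

lemma main_inter:
  assumes K: "K > 0" and Ks: "KsOK K Ks"
    and Z: "\<forall>i<N. \<forall>k<K. Z i k = 1 \<or> Z i k = -1"
    and inv: "invertible_mat (transpose_mat (treat_design Inter K N J Z x) * treat_design Inter K N J Z x)"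
  shows "tautilde Inter K Ks N J Z x Y = contrast_mat K Ks *\<^sub>v Yhat Inter K N J Z x Y
       \<and> Omegatilde Inter K Ks N J Z x Y
           = contrast_mat K Ks * Psihat Inter K N J Z x Y * transpose_mat (contrast_mat K Ks)"
proof -
  have XT: "treat_design Inter K N J Z x \<in> carrier_mat N (2^K + 2^K*J)"
    by (simp add: treat_design_def Let_def)
  have top: "\<forall>m<length Ks. \<forall>a<2^K + 2^K*J. 2 * BIi K Ks J $$ (Suc m, a) = (if a < 2^K then contrast_mat K Ks $$ (m,a) else 0)"
    using BI_top[OF K Ks] by blast
  have Qp: "2^K \<le> 2^K + 2^K*J" by simp
  have y: "vec N Y \<in> carrier_vec N" by simp
  note g = main_generic[OF K Ks XT XI[OF Ks Z] BI_carrier BIi_carrier BI_inv[OF Ks] inv Qp top y]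
  show ?thesis unfolding tautilde_def Omegatilde_def Yhat_def Psihat_def using g(1) g(2) by (rule conjI)
qed

lemma unadj_treat: "treat_design Unadj K N J Z x = treat_design Addit K N 0 Z x"
  by (rule eq_matI) (simp_all add: treat_design_def Let_def)

lemma unadj_fact: "fact_design Unadj K Ks N J Z x = fact_design Addit K Ks N 0 Z x"
proof (rule eq_matI)
  fix i c assume "i < dim_row (fact_design Addit K Ks N 0 Z x)" "c < dim_col (fact_design Addit K Ks N 0 Z x)"
  then have "i < N" "c < 1 + length Ks" by (simp_all add: fact_design_def Let_def)
  then show "fact_design Unadj K Ks N J Z x $$ (i, c) = fact_design Addit K Ks N 0 Z x $$ (i, c)"
    by (simp add: fact_design_def Let_def)
qed (simp_all add: fact_design_def Let_def)

theorem proposition1: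
  fixes K N J :: nat and Z x :: "nat \<Rightarrow> nat \<Rightarrow> real" and Y :: "nat \<Rightarrow> real"
    and Ks :: "nat set list" and r :: regtype
  assumes "K > 0"
    and "distinct Ks" and "set Ks = {S. S \<subseteq> {0..<K} \<and> S \<noteq> {}}"
    and "\<forall>i<N. \<forall>k<K. Z i k = 1 \<or> Z i k = -1"
    and "\<forall>j<J. (\<Sum>i<N. x i j) = 0"
    and "\<forall>q<2 ^ K. \<exists>i<N. tind K Z i q = 1"
    and "invertible_mat (transpose_mat (treat_design r K N J Z x) * treat_design r K N J Z x)"
  shows "tautilde r K Ks N J Z x Y = contrast_mat K Ks *\<^sub>v Yhat r K N J Z x Y
       \<and> Omegatilde r K Ks N J Z x Y
           = contrast_mat K Ks * Psihat r K N J Z x Y * transpose_mat (contrast_mat K Ks)"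
proof -
  have Ks: "KsOK K Ks" using assms(2,3) unfolding KsOK_def by blast
  show ?thesis
  proof (cases r)
    case Unadj
    have inv: "invertible_mat (transpose_mat (treat_design Addit K N 0 Z x) * treat_design Addit K N 0 Z x)"
      using assms(7) unfolding Unadj unadj_treat .
    have "tautilde Unadj K Ks N J Z x Y = tautilde Addit K Ks N 0 Z x Y"
      "Omegatilde Unadj K Ks N J Z x Y = Omegatilde Addit K Ks N 0 Z x Y"
      "Yhat Unadj K N J Z x Y = Yhat Addit K N 0 Z x Y"
      "Psihat Unadj K N J Z x Y = Psihat Addit K N 0 Z x Y"
      unfolding tautilde_def Omegatilde_def Yhat_def Psihat_def unadj_treat unadj_fact by simp_all
    then show ?thesis using main_addit[OF assms(1) Ks assms(4) inv, of Y] Unadj by simp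
  next
    case Addit
    then show ?thesis using main_addit[OF assms(1) Ks assms(4), of J x Y] assms(7) by simp
  next
    case Inter
    then show ?thesis using main_inter[OF assms(1) Ks assms(4), of J x Y] assms(7) by simp
  qed
qed

end
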